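(* Each of the two cyclic Steiner triple systems of order $15$ on $\mathbb{Z}_{15}$, namely the one generated (under $i\mapsto i+1 \bmod 15$) by the base blocks $\{0,1,4\},\{0,2,8\},\{0,5,10\}$ and the one generated by the base blocks $\{0,1,4\},\{0,2,9\},\{0,5,10\}$, admits a zero-sum $3$-flow.
   Context: The blocks of the system generated by base blocks are all translates $\{a+i,b+i,c+i\}$ (mod 15) of the base blocks; the base block $\{0,5,10\}$ generates only 5 distinct blocks. For a design $(X,\mathcal{B})$, a zero-sum $3$-flow is a map $f:\mathcal{B}\to\{\pm1,\pm2\}$ such that $\sum_{B\ni x} f(B)=0$ for every point $x\in X$. *)

theory Defs
  imports Main
begin

definition Z15 :: "nat set" where
  "Z15 = {0..<15}"

definition translate15 :: "nat set \<Rightarrow> nat \<Rightarrow> nat set" where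
  "translate15 B i = (\<lambda>b. (b + i) mod 15) ` B"

text \<open>Block set generated by base blocks: all distinct translates (as a set of blocks,
  so the short orbit of {0,5,10} contributes only 5 blocks).\<close>
definition cyclic_blocks15 :: "nat set set \<Rightarrow> nat set set" where
  "cyclic_blocks15 Bases = {translate15 B i | B i. B \<in> Bases \<and> i < 15}"

definition zero_sum_3_flow :: "'a set \<Rightarrow> 'a set set \<Rightarrow> ('a set \<Rightarrow> int) \<Rightarrow> bool" where
  "zero_sum_3_flow X Bs f \<longleftrightarrow>
     (\<forall>B\<in>Bs. f B \<in> {-2, -1, 1, 2}) \<and>
     (\<forall>x\<in>X. (\<Sum>B\<in>{B\<in>Bs. x \<in> B}. f B) = 0)"

end

theory Submission
  imports Defs "HOL-Library.Product_Lexorder"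
begin
definition tri :: "nat \<times> nat \<times> nat \<Rightarrow> nat set" where "tri t = (case t of (a,b,c) \<Rightarrow> {a,b,c})"
definition sort3 :: "nat \<times> nat \<times> nat \<Rightarrow> nat \<times> nat \<times> nat" where
 "sort3 t = (case t of (a,b,c) \<Rightarrow>
   if a \<le> b then (if b \<le> c then (a,b,c) else if a \<le> c then (a,c,b) else (c,a,b))
   else (if a \<le> c then (b,a,c) else if b \<le> c then (b,c,a) else (c,b,a)))"
lemma tri_sort3: "tri (sort3 t) = tri t" unfolding tri_def sort3_def by (cases t) auto
definition sh :: "nat \<times> nat \<times> nat \<Rightarrow> nat \<Rightarrow> nat \<times> nat \<times> nat" where
  "sh t i = sort3 (case t of (a,b,c) \<Rightarrow> ((a+i) mod 15, (b+i) mod 15, (c+i) mod 15))"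
definition orb :: "nat \<times> nat \<times> nat \<Rightarrow> (nat \<times> nat \<times> nat) list" where
 "orb t = map (sh t) [0..<15]"
lemma cb3: "cyclic_blocks15 {tri s, tri t, tri u} = tri ` set (orb s @ orb t @ orb u)"
proof -
  have h: "translate15 (tri t) i = tri (case t of (a,b,c) \<Rightarrow> ((a+i) mod 15, (b+i) mod 15, (c+i) mod 15))" for t i
    unfolding translate15_def tri_def by (cases t) simp
  have "translate15 (tri t) i = tri (sh t i)" for t i unfolding sh_def tri_sort3 h ..
  then have "cyclic_blocks15 {tri s, tri t, tri u} = {tri (sh v i) | v i. v \<in> {s,t,u} \<and> i < 15}"
    unfolding cyclic_blocks15_def by blast
  also have "\<dots> = tri ` set (orb s @ orb t @ orb u)"
    unfolding orb_def set_append set_map image_Un image_image set_upt atLeast0LessThan lessThan_iff by blast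
  finally show ?thesis .
qed
lemma set_sort_remdups: "set xs = set (sort (remdups xs))" by simp

definition srt :: "nat \<times> nat \<times> nat \<Rightarrow> bool" where "srt t = (case t of (a,b,c) \<Rightarrow> a < b \<and> b < c)"
lemma Min_tri: "srt t \<Longrightarrow> Min (tri t) = fst t" unfolding srt_def tri_def by (cases t) (auto simp: Min_insert)
lemma Max_tri: "srt t \<Longrightarrow> Max (tri t) = snd (snd t)" unfolding srt_def tri_def by (cases t) (auto simp: Max_insert)
lemma inj_tri: "inj_on tri {t. srt t}"
proof (rule inj_onI)
  fix s t assume s: "s \<in> {t. srt t}" and t: "t \<in> {t. srt t}" and e: "tri s = tri t"
  obtain a b c where sd: "s = (a,b,c)" by (cases s) auto
  obtain a' b' c' where td: "t = (a',b',c')" by (cases t) auto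
  have "a = a'" using Min_tri[of s] Min_tri[of t] s t e sd td by simp
  moreover have "c = c'" using Max_tri[of s] Max_tri[of t] s t e sd td by simp
  moreover have "b = b'"
  proof -
    have "b \<in> {a',b',c'}" using e sd td unfolding tri_def by auto
    moreover have "a < b" "b < c" using s sd unfolding srt_def by auto
    ultimately show ?thesis using \<open>a = a'\<close> \<open>c = c'\<close> by auto
  qed
  ultimately show "s = t" using sd td by simp
qed
lemma sum_filter_list: "distinct L \<Longrightarrow> (\<Sum>B\<in>{B\<in>set L. P B}. f B) = sum_list (map f (filter P L))"
  by (metis set_filter distinct_filter sum_list_distinct_conv_sum_set)
lemma distinct_tri: "distinct T \<Longrightarrow> list_all srt T \<Longrightarrow> distinct (map tri T)"
  by (simp add: distinct_map list_all_iff) (meson inj_on_subset inj_tri mem_Collect_eq subsetI)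
lemma less15: "(i::nat) < 15 \<longleftrightarrow> i \<in> {0,1,2,3,4,5,6,7,8,9,10,11,12,13,14}" by (auto simp: less_Suc_eq numeral_eq_Suc)
lemma flow_lemma:
  assumes d: "distinct T" and s: "list_all srt T"
  and v: "list_all (\<lambda>t. g (fst t) (snd (snd t)) \<in> {-2,-1,1,2}) T"
  and z: "list_all (\<lambda>x. sum_list (map (\<lambda>t. g (fst t) (snd (snd t))) (filter (\<lambda>(a,b,c). x = a \<or> x = b \<or> x = c) T)) = 0) [0..<15]"
  shows "zero_sum_3_flow Z15 (set (map tri T)) (\<lambda>B. g (Min B) (Max B))"
proof -
  have st: "\<And>t. t \<in> set T \<Longrightarrow> srt t" using s by (simp add: list_all_iff)
  have dm: "distinct (map tri T)" using distinct_tri d s by blast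
  have 1: "\<forall>B\<in>set (map tri T). g (Min B) (Max B) \<in> {-2,-1,1,2}"
    using v st by (auto simp: list_all_iff Min_tri Max_tri)
  have 2: "(\<Sum>B\<in>{B\<in>set (map tri T). x \<in> B}. g (Min B) (Max B)) = 0" if x: "x \<in> Z15" for x
  proof -
    have "(\<Sum>B\<in>{B\<in>set (map tri T). x \<in> B}. g (Min B) (Max B))
        = sum_list (map (\<lambda>B. g (Min B) (Max B)) (filter (\<lambda>B. x \<in> B) (map tri T)))"
      by (rule sum_filter_list[OF dm])
    also have "\<dots> = sum_list (map (\<lambda>t. g (fst t) (snd (snd t))) (filter (\<lambda>(a,b,c). x = a \<or> x = b \<or> x = c) T))"
      using st by (induction T) (auto simp: tri_def Min_tri[symmetric] Max_tri[symmetric])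
    also have "\<dots> = 0" using z x by (simp add: list_all_iff Z15_def)
    finally show ?thesis .
  qed
  show ?thesis unfolding zero_sum_3_flow_def using 1 2 by blast
qed


definition T0 :: "(nat\<times>nat\<times>nat) list" where "T0 = [(0,1,4), (0,2,8), (0,3,14), (0,5,10), (0,6,13), (0,7,9), (0,11,12), (1,2,5), (1,3,9), (1,6,11), (1,7,14), (1,8,10), (1,12,13), (2,3,6), (2,4,10), (2,7,12), (2,9,11), (2,13,14), (3,4,7), (3,5,11), (3,8,13), (3,10,12), (4,5,8), (4,6,12), (4,9,14), (4,11,13), (5,6,9), (5,7,13), (5,12,14), (6,7,10), (6,8,14), (7,8,11), (8,9,12), (9,10,13), (10,11,14)]"
definition g0 :: "nat \<Rightarrow> nat \<Rightarrow> int" where "g0 = (\<lambda>a c::nat. if a = 0 \<and> c = 4 then (-1::int) else if a = 0 \<and> c = 8 then (1::int) else if a = 0 \<and> c = 14 then (1::int) else if a = 0 \<and> c = 10 then (1::int) else if a = 0 \<and> c = 13 then (1::int) else if a = 0 \<and> c = 9 then (-2::int) else if a = 0 \<and> c = 12 then (-1::int) else if a = 1 \<and> c = 5 then (1::int) else if a = 1 \<and> c = 9 then (1::int) else if a = 1 \<and> c = 11 then (-2::int) else if a = 1 \<and> c = 14 then (1::int) else if a = 1 \<and> c = 10 then (1::int) else if a = 1 \<and> c = 13 then (-1::int) else if a = 2 \<and> c = 6 then (-1::int) else if a = 2 \<and> c = 10 then (-1::int) else if a = 2 \<and> c = 12 then (1::int) else if a = 2 \<and> c = 11 then (1::int) else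 if a = 2 \<and> c = 14 then (-2::int) else if a = 3 \<and> c = 7 then (-1::int) else if a = 3 \<and> c = 11 then (1::int) else if a = 3 \<and> c = 13 then (1::int) else if a = 3 \<and> c = 12 then (-2::int) else if a = 4 \<and> c = 8 then (-2::int) else if a = 4 \<and> c = 12 then (2::int) else if a = 4 \<and> c = 14 then (1::int) else if a = 4 \<and> c = 13 then (2::int) else if a = 5 \<and> c = 9 then (-1::int) else if a = 5 \<and> c = 13 then (1::int) else if a = 5 \<and> c = 14 then (-1::int) else if a = 6 \<and> c = 10 then (2::int) else if a = 6 \<and> c = 14 then (-1::int) else if a = 7 \<and> c = 11 then (-2::int) else if a = 8 \<and> c = 12 then (2::int) else if a = 9 \<and> c = 13 then (-2::int) else if a = 10 \<and> c = 14 then (1::int) else 0)"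
lemma cb0: "cyclic_blocks15 {{0,1,4}, {0,2,8}, {0,5,10}} = set (map tri T0)"
proof -
  have e: "{{0,1,4}, {0,2,8}, {0,5,10}} = {tri (0,1,4), tri (0,2,8), tri (0,5,10)}" by (simp only: tri_def prod.case)
  have s: "sort (remdups (orb (0,1,4) @ orb (0,2,8) @ orb (0,5,10))) = T0"
    unfolding orb_def T0_def by (simp add: sort3_def sh_def upt_rec)
  have "set (orb (0,1,4) @ orb (0,2,8) @ orb (0,5,10)) = set T0" by (metis s set_sort_remdups)
  then show ?thesis unfolding e cb3 set_map by simp
qed
lemma d0: "distinct T0" by (simp add: T0_def)
lemma s0: "list_all srt T0" by (simp add: T0_def srt_def)
lemma v0: "list_all (\<lambda>t. g0 (fst t) (snd (snd t)) \<in> {-2,-1,1,2}) T0" by (simp add: T0_def g0_def)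
lemma z0: "list_all (\<lambda>x. sum_list (map (\<lambda>t. g0 (fst t) (snd (snd t))) (filter (\<lambda>(a,b,c). x = a \<or> x = b \<or> x = c) T0)) = 0) [0..<15]"
  by (simp add: T0_def g0_def upt_rec)
lemma fl0: "zero_sum_3_flow Z15 (cyclic_blocks15 {{0,1,4}, {0,2,8}, {0,5,10}}) (\<lambda>B. g0 (Min B) (Max B))"
  unfolding cb0 by (rule flow_lemma[OF d0 s0 v0 z0])

definition T1 :: "(nat\<times>nat\<times>nat) list" where "T1 = [(0,1,4), (0,2,9), (0,3,14), (0,5,10), (0,6,8), (0,7,13), (0,11,12), (1,2,5), (1,3,10), (1,6,11), (1,7,9), (1,8,14), (1,12,13), (2,3,6), (2,4,11), (2,7,12), (2,8,10), (2,13,14), (3,4,7), (3,5,12), (3,8,13), (3,9,11), (4,5,8), (4,6,13), (4,9,14), (4,10,12), (5,6,9), (5,7,14), (5,11,13), (6,7,10), (6,12,14), (7,8,11), (8,9,12), (9,10,13), (10,11,14)]"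
definition g1 :: "nat \<Rightarrow> nat \<Rightarrow> int" where "g1 = (\<lambda>a c::nat. if a = 0 \<and> c = 4 then (2::int) else if a = 0 \<and> c = 9 then (-1::int) else if a = 0 \<and> c = 14 then (1::int) else if a = 0 \<and> c = 10 then (-1::int) else if a = 0 \<and> c = 8 then (-1::int) else if a = 0 \<and> c = 13 then (-1::int) else if a = 0 \<and> c = 12 then (1::int) else if a = 1 \<and> c = 5 then (1::int) else if a = 1 \<and> c = 10 then (-1::int) else if a = 1 \<and> c = 11 then (2::int) else if a = 1 \<and> c = 9 then (-1::int) else if a = 1 \<and> c = 14 then (-1::int) else if a = 1 \<and> c = 13 then (-2::int) else if a = 2 \<and> c = 6 then (-2::int) else if a = 2 \<and> c = 11 then (-2::int) else if a = 2 \<and> c = 12 then (1::int) else if a = 2 \<and> c = 10 then (1::int) else if a = 2 \<and> c = 14 then (2::int) else if a = 3 \<and> c = 7 then (-1::int) else if a = 3 \<and> c = 12 then (-1::int) else if a = 3 \<and> c = 13 then (2::int) else if a = 3 \<and> c = 11 then (2::int) else if a = 4 \<and> c = 8 then (-1::int) else if a = 4 \<and> c = 13 then (1::int) else if a = 4 \<and> c = 14 then (-1::int) else if a = 4 \<and> c = 12 then (2::int) else if a = 5 \<and> c = 9 then (1::int) else if a = 5 \<and> c = 14 then (2::int) else if a = 5 \<and> c = 13 then (-1::int) else if a = 6 \<and> c = 10 then (1::int) else if a = 6 \<and> c = 14 then (-2::int) else if a = 7 \<and> c = 11 then (-1::int) else if a = 8 \<and> c = 12 then (1::int) else if a = 9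 \<and> c = 13 then (-1::int) else if a = 10 \<and> c = 14 then (-1::int) else 0)"
lemma cb1: "cyclic_blocks15 {{0,1,4}, {0,2,9}, {0,5,10}} = set (map tri T1)"
proof -
  have e: "{{0,1,4}, {0,2,9}, {0,5,10}} = {tri (0,1,4), tri (0,2,9), tri (0,5,10)}" by (simp only: tri_def prod.case)
  have s: "sort (remdups (orb (0,1,4) @ orb (0,2,9) @ orb (0,5,10))) = T1"
    unfolding orb_def T1_def by (simp add: sort3_def sh_def upt_rec)
  have "set (orb (0,1,4) @ orb (0,2,9) @ orb (0,5,10)) = set T1" by (metis s set_sort_remdups)
  then show ?thesis unfolding e cb3 set_map by simp
qed
lemma d1: "distinct T1" by (simp add: T1_def)
lemma s1: "list_all srt T1" by (simp add: T1_def srt_def)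
lemma v1: "list_all (\<lambda>t. g1 (fst t) (snd (snd t)) \<in> {-2,-1,1,2}) T1" by (simp add: T1_def g1_def)
lemma z1: "list_all (\<lambda>x. sum_list (map (\<lambda>t. g1 (fst t) (snd (snd t))) (filter (\<lambda>(a,b,c). x = a \<or> x = b \<or> x = c) T1)) = 0) [0..<15]"
  by (simp add: T1_def g1_def upt_rec)
lemma fl1: "zero_sum_3_flow Z15 (cyclic_blocks15 {{0,1,4}, {0,2,9}, {0,5,10}}) (\<lambda>B. g1 (Min B) (Max B))"
  unfolding cb1 by (rule flow_lemma[OF d1 s1 v1 z1])

theorem mainTheorem8:
  shows "(\<exists>f. zero_sum_3_flow Z15 (cyclic_blocks15 {{0,1,4}, {0,2,8}, {0,5,10}}) f)
       \<and> (\<exists>f. zero_sum_3_flow Z15 (cyclic_blocks15 {{0,1,4}, {0,2,9}, {0,5,10}}) f)"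
  using fl0 fl1 by blast

end
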